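(* Let $\gamma:I\to\mathbb{R}^2$ be a $C^\infty$ curve with $0\in I$, $\gamma'(0)=\gamma''(0)=\gamma'''(0)=\mathbf{0}$ and $\gamma^{(4)}(0)\neq\mathbf{0}$. Then for every $C^\infty$ diffeomorphism germ $\psi$ of $(\mathbb{R},0)$ onto $(\mathbb{R},0)$ and every congruence $\Phi(x)=Rx+b$ of $\mathbb{R}^2$ ($R\in O(2)$, $b\in\mathbb{R}^2$), the curves $\gamma\circ\psi$ and $\Phi\circ\gamma$ have the same $(4,5;\pm7)$-cuspidal curvature $\kappa_q$ as $\gamma$.
   Context: For a curve $c$ with $c'(0)=c''(0)=c'''(0)=\mathbf{0}$ and $c^{(4)}(0)\neq\mathbf{0}$, set $A=\det(c^{(5)}(0),c^{(4)}(0))$, $B=\det(c^{(6)}(0),c^{(4)}(0))$, $C=\det(c^{(7)}(0),c^{(4)}(0))$, $D=\det(c^{(6)}(0),c^{(5)}(0))$; the $(4,5;\pm7)$-cuspidal curvature is $\kappa_q=\dfrac{-77B^2+105AD+60AC}{\|c^{(4)}(0)\|^5}$, where $\|\cdot\|$ is the Euclidean norm. *)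

theory Defs
  imports "HOL-Analysis.Analysis"
begin

definition vderiv_n :: "nat \<Rightarrow> (real \<Rightarrow> 'a::real_normed_vector) \<Rightarrow> real \<Rightarrow> 'a" where
  "vderiv_n n f = ((\<lambda>g t. vector_derivative g (at t)) ^^ n) f"

definition smooth_on :: "real set \<Rightarrow> (real \<Rightarrow> 'a::real_normed_vector) \<Rightarrow> bool" where
  "smooth_on U f \<longleftrightarrow> (\<forall>n. \<forall>t\<in>U. (vderiv_n n f has_vector_derivative vderiv_n (Suc n) f t) (at t))"

definition det2 :: "real^2 \<Rightarrow> real^2 \<Rightarrow> real" where
  "det2 u v = u$1 * v$2 - u$2 * v$1"

definition cusp_kappa :: "(real \<Rightarrow> real^2) \<Rightarrow> real" where
  "cusp_kappa c =
    (let c4 = vderiv_n 4 c 0; c5 = vderiv_n 5 c 0; c6 = vderiv_n 6 c 0; c7 = vderiv_n 7 c 0;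
         A = det2 c5 c4; B = det2 c6 c4; C = det2 c7 c4; D = det2 c6 c5
     in (-77 * B^2 + 105 * A * D + 60 * A * C) / norm c4 ^ 5)"

end

theory Submission
  imports Defs
begin

lemma vderiv_n_Suc: "vderiv_n (Suc n) f t = vector_derivative (vderiv_n n f) (at t)"
  by (simp add: vderiv_n_def)

lemma vderiv_n_0[simp]: "vderiv_n 0 f = f"
  by (simp add: vderiv_n_def)

lemma vstep:
  assumes "open J" "\<forall>s\<in>J. vderiv_n n f s = h s"
    and "\<forall>t\<in>J. (h has_vector_derivative D t) (at t)"
  shows "\<forall>t\<in>J. vderiv_n (Suc n) f t = D t"
proof
  fix t assume t: "t \<in> J"
  have "(vderiv_n n f has_vector_derivative D t) (at t)"
    by (rule has_vector_derivative_transform_within_open[OF _ assms(1) t]) (use assms t in auto)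
  then show "vderiv_n (Suc n) f t = D t"
    by (simp add: vderiv_n_Suc vector_derivative_at)
qed

lemma faa_step1:
  fixes p :: "nat \<Rightarrow> real \<Rightarrow> real" and G :: "nat \<Rightarrow> real \<Rightarrow> real^2"
  assumes hp: "\<And>j. (p j has_real_derivative p (Suc j) t) (at t)"
    and hG: "\<And>k. (G k has_vector_derivative p 1 t *\<^sub>R G (Suc k) t) (at t)"
  shows "((\<lambda>s. ((p 1 s)) *\<^sub>R G 1 s) has_vector_derivative (((p 2 t)) *\<^sub>R G 1 t + ((p 1 t ^ 2)) *\<^sub>R G 2 t)) (at t)"
  apply (rule has_vector_derivative_eq_rhs)
   apply (rule derivative_eq_intros hp hG refl | rule has_vector_derivative_scaleR)+
  apply (simp add: vec_eq_iff forall_2 eval_nat_numeral algebra_simps)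
  done

lemma faa_step2:
  fixes p :: "nat \<Rightarrow> real \<Rightarrow> real" and G :: "nat \<Rightarrow> real \<Rightarrow> real^2"
  assumes hp: "\<And>j. (p j has_real_derivative p (Suc j) t) (at t)"
    and hG: "\<And>k. (G k has_vector_derivative p 1 t *\<^sub>R G (Suc k) t) (at t)"
  shows "((\<lambda>s. ((p 2 s)) *\<^sub>R G 1 s + ((p 1 s ^ 2)) *\<^sub>R G 2 s) has_vector_derivative (((p 3 t)) *\<^sub>R G 1 t + (3 * (p 1 t) * (p 2 t)) *\<^sub>R G 2 t + ((p 1 t ^ 3)) *\<^sub>R G 3 t)) (at t)"
  apply (rule has_vector_derivative_eq_rhs)
   apply (rule derivative_eq_intros hp hG refl | rule has_vector_derivative_scaleR)+
  apply (simp add: vec_eq_iff forall_2 eval_nat_numeral algebra_simps)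
  done

lemma faa_step3:
  fixes p :: "nat \<Rightarrow> real \<Rightarrow> real" and G :: "nat \<Rightarrow> real \<Rightarrow> real^2"
  assumes hp: "\<And>j. (p j has_real_derivative p (Suc j) t) (at t)"
    and hG: "\<And>k. (G k has_vector_derivative p 1 t *\<^sub>R G (Suc k) t) (at t)"
  shows "((\<lambda>s. ((p 3 s)) *\<^sub>R G 1 s + (3 * (p 1 s) * (p 2 s)) *\<^sub>R G 2 s + ((p 1 s ^ 3)) *\<^sub>R G 3 s) has_vector_derivative (((p 4 t)) *\<^sub>R G 1 t + (3 * (p 2 t ^ 2) + 4 * (p 1 t) * (p 3 t)) *\<^sub>R G 2 t + (6 * (p 1 t ^ 2) * (p 2 t)) *\<^sub>R G 3 t + ((p 1 t ^ 4)) *\<^sub>R G 4 t)) (at t)"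
  apply (rule has_vector_derivative_eq_rhs)
   apply (rule derivative_eq_intros hp hG refl | rule has_vector_derivative_scaleR)+
  apply (simp add: vec_eq_iff forall_2 eval_nat_numeral algebra_simps)
  done

lemma faa_step4:
  fixes p :: "nat \<Rightarrow> real \<Rightarrow> real" and G :: "nat \<Rightarrow> real \<Rightarrow> real^2"
  assumes hp: "\<And>j. (p j has_real_derivative p (Suc j) t) (at t)"
    and hG: "\<And>k. (G k has_vector_derivative p 1 t *\<^sub>R G (Suc k) t) (at t)"
  shows "((\<lambda>s. ((p 4 s)) *\<^sub>R G 1 s + (3 * (p 2 s ^ 2) + 4 * (p 1 s) * (p 3 s)) *\<^sub>R G 2 s + (6 * (p 1 s ^ 2) * (p 2 s)) *\<^sub>R G 3 s + ((p 1 s ^ 4)) *\<^sub>R G 4 s) has_vector_derivative (((p 5 t)) *\<^sub>R G 1 t + (10 * (p 2 t) * (p 3 t) + 5 * (p 1 t) * (p 4 t)) *\<^sub>R G 2 t + (15 * (p 1 t) * (p 2 t ^ 2) + 10 * (p 1 t ^ 2) * (p 3 t)) *\<^sub>R G 3 t + (10 * (p 1 t ^ 3) * (p 2 t)) *\<^sub>R G 4 t + ((p 1 t ^ 5)) *\<^sub>R G 5 t)) (at t)"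
  apply (rule has_vector_derivative_eq_rhs)
   apply (rule derivative_eq_intros hp hG refl | rule has_vector_derivative_scaleR)+
  apply (simp add: vec_eq_iff forall_2 eval_nat_numeral algebra_simps)
  done

lemma faa_step5:
  fixes p :: "nat \<Rightarrow> real \<Rightarrow> real" and G :: "nat \<Rightarrow> real \<Rightarrow> real^2"
  assumes hp: "\<And>j. (p j has_real_derivative p (Suc j) t) (at t)"
    and hG: "\<And>k. (G k has_vector_derivative p 1 t *\<^sub>R G (Suc k) t) (at t)"
  shows "((\<lambda>s. ((p 5 s)) *\<^sub>R G 1 s + (10 * (p 2 s) * (p 3 s) + 5 * (p 1 s) * (p 4 s)) *\<^sub>R G 2 s + (15 * (p 1 s) * (p 2 s ^ 2) + 10 * (p 1 s ^ 2) * (p 3 s)) *\<^sub>R G 3 s + (10 * (p 1 s ^ 3) * (p 2 s)) *\<^sub>R G 4 s + ((p 1 s ^ 5)) *\<^sub>R G 5 s) has_vector_derivative (((p 6 t)) *\<^sub>R G 1 t + (10 * (p 3 t ^ 2) + 15 * (p 2 t) * (p 4 t) + 6 * (p 1 t) * (p 5 t)) *\<^sub>R G 2 t + (15 * (p 2 t ^ 3) + 60 * (p 1 t) * (p 2 t) * (p 3 t) + 15 * (p 1 t ^ 2) * (p 4 t)) *\<^sub>R G 3 t + (45 * (p 1 t ^ 2) * (p 2 t ^ 2) + 20 * (p 1 t ^ 3) * (p 3 t)) *\<^sub>R G 4 t + (15 * (p 1 t ^ 4) * (p 2 t)) *\<^sub>R G 5 t + ((p 1 t ^ 6)) *\<^sub>R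 G 6 t)) (at t)"
  apply (rule has_vector_derivative_eq_rhs)
   apply (rule derivative_eq_intros hp hG refl | rule has_vector_derivative_scaleR)+
  apply (simp add: vec_eq_iff forall_2 eval_nat_numeral algebra_simps)
  done

lemma faa_step6:
  fixes p :: "nat \<Rightarrow> real \<Rightarrow> real" and G :: "nat \<Rightarrow> real \<Rightarrow> real^2"
  assumes hp: "\<And>j. (p j has_real_derivative p (Suc j) t) (at t)"
    and hG: "\<And>k. (G k has_vector_derivative p 1 t *\<^sub>R G (Suc k) t) (at t)"
  shows "((\<lambda>s. ((p 6 s)) *\<^sub>R G 1 s + (10 * (p 3 s ^ 2) + 15 * (p 2 s) * (p 4 s) + 6 * (p 1 s) * (p 5 s)) *\<^sub>R G 2 s + (15 * (p 2 s ^ 3) + 60 * (p 1 s) * (p 2 s) * (p 3 s) + 15 * (p 1 s ^ 2) * (p 4 s)) *\<^sub>R G 3 s + (45 * (p 1 s ^ 2) * (p 2 s ^ 2) + 20 * (p 1 s ^ 3) * (p 3 s)) *\<^sub>R G 4 s + (15 * (p 1 s ^ 4) * (p 2 s)) *\<^sub>R G 5 s + ((p 1 s ^ 6)) *\<^sub>R G 6 s) has_vector_derivative (((p 7 t)) *\<^sub>R G 1 t + (35 * (p 3 t) * (p 4 t) + 21 * (p 2 t) * (p 5 t) + 7 * (p 1 t) * (p 6 t)) *\<^sub>R G 2 t + (105 * (p 2 t ^ 2) * (p 3 t) + 70 * (p 1 t) * (p 3 t ^ 2) + 105 * (p 1 t) * (p 2 t) * (p 4 t) + 21 * (p 1 t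 ^ 2) * (p 5 t)) *\<^sub>R G 3 t + (105 * (p 1 t) * (p 2 t ^ 3) + 210 * (p 1 t ^ 2) * (p 2 t) * (p 3 t) + 35 * (p 1 t ^ 3) * (p 4 t)) *\<^sub>R G 4 t + (105 * (p 1 t ^ 3) * (p 2 t ^ 2) + 35 * (p 1 t ^ 4) * (p 3 t)) *\<^sub>R G 5 t + (21 * (p 1 t ^ 5) * (p 2 t)) *\<^sub>R G 6 t + ((p 1 t ^ 7)) *\<^sub>R G 7 t)) (at t)"
  apply (rule has_vector_derivative_eq_rhs)
   apply (rule derivative_eq_intros hp hG refl | rule has_vector_derivative_scaleR)+
  apply (simp add: vec_eq_iff forall_2 eval_nat_numeral algebra_simps)
  done
lemma faa_all:
  fixes f :: "real \<Rightarrow> real^2" and p :: "nat \<Rightarrow> real \<Rightarrow> real" and G :: "nat \<Rightarrow> real \<Rightarrow> real^2"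
  assumes J: "open J" "0 \<in> J"
    and hp: "\<And>j t. t \<in> J \<Longrightarrow> (p j has_real_derivative p (Suc j) t) (at t)"
    and hG: "\<And>k t. t \<in> J \<Longrightarrow> (G k has_vector_derivative p 1 t *\<^sub>R G (Suc k) t) (at t)"
    and f0: "\<And>t. t \<in> J \<Longrightarrow> f t = G 0 t"
    and z: "G 1 0 = 0" "G 2 0 = 0" "G 3 0 = 0"
  shows "vderiv_n 4 f 0 = ((p 1 0 ^ 4)) *\<^sub>R G 4 0 \<and> vderiv_n 5 f 0 = (10 * (p 1 0 ^ 3) * (p 2 0)) *\<^sub>R G 4 0 + ((p 1 0 ^ 5)) *\<^sub>R G 5 0 \<and> vderiv_n 6 f 0 = (45 * (p 1 0 ^ 2) * (p 2 0 ^ 2) + 20 * (p 1 0 ^ 3) * (p 3 0)) *\<^sub>R G 4 0 + (15 * (p 1 0 ^ 4) * (p 2 0)) *\<^sub>R G 5 0 + ((p 1 0 ^ 6)) *\<^sub>R G 6 0 \<and> vderiv_n 7 f 0 = (105 * (p 1 0) * (p 2 0 ^ 3) + 210 * (p 1 0 ^ 2) * (p 2 0) * (p 3 0) + 35 * (p 1 0 ^ 3) * (p 4 0)) *\<^sub>R G 4 0 + (105 * (p 1 0 ^ 3) * (p 2 0 ^ 2) + 35 * (p 1 0 ^ 4) * (p 3 0)) *\<^sub>R G 5 0 + (21 * (p 1 0 ^ 5) * (p 2 0)) *\<^sub>R G 6 0 + ((p 1 0 ^ 7)) *\<^sub>R G 7 0"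
proof -
  have e0: "\<forall>t\<in>J. vderiv_n 0 f t = G 0 t" using f0 by (simp add: vderiv_n_def)
  have "\<forall>t\<in>J. vderiv_n (Suc 0) f t = ((p 1 t)) *\<^sub>R G 1 t"
    by (rule vstep[OF J(1) e0]) (metis One_nat_def hG)
  then have e1: "\<forall>t\<in>J. vderiv_n 1 f t = ((p 1 t)) *\<^sub>R G 1 t" by (simp add: eval_nat_numeral)
  have "\<forall>t\<in>J. vderiv_n (Suc 1) f t = ((p 2 t)) *\<^sub>R G 1 t + ((p 1 t ^ 2)) *\<^sub>R G 2 t"
    by (rule vstep[OF J(1) e1]) (blast intro: faa_step1 hp hG)
  then have e2: "\<forall>t\<in>J. vderiv_n 2 f t = ((p 2 t)) *\<^sub>R G 1 t + ((p 1 t ^ 2)) *\<^sub>R G 2 t" by (simp add: eval_nat_numeral)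
  have "\<forall>t\<in>J. vderiv_n (Suc 2) f t = ((p 3 t)) *\<^sub>R G 1 t + (3 * (p 1 t) * (p 2 t)) *\<^sub>R G 2 t + ((p 1 t ^ 3)) *\<^sub>R G 3 t"
    by (rule vstep[OF J(1) e2]) (blast intro: faa_step2 hp hG)
  then have e3: "\<forall>t\<in>J. vderiv_n 3 f t = ((p 3 t)) *\<^sub>R G 1 t + (3 * (p 1 t) * (p 2 t)) *\<^sub>R G 2 t + ((p 1 t ^ 3)) *\<^sub>R G 3 t" by (simp add: eval_nat_numeral)
  have "\<forall>t\<in>J. vderiv_n (Suc 3) f t = ((p 4 t)) *\<^sub>R G 1 t + (3 * (p 2 t ^ 2) + 4 * (p 1 t) * (p 3 t)) *\<^sub>R G 2 t + (6 * (p 1 t ^ 2) * (p 2 t)) *\<^sub>R G 3 t + ((p 1 t ^ 4)) *\<^sub>R G 4 t"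
    by (rule vstep[OF J(1) e3]) (blast intro: faa_step3 hp hG)
  then have e4: "\<forall>t\<in>J. vderiv_n 4 f t = ((p 4 t)) *\<^sub>R G 1 t + (3 * (p 2 t ^ 2) + 4 * (p 1 t) * (p 3 t)) *\<^sub>R G 2 t + (6 * (p 1 t ^ 2) * (p 2 t)) *\<^sub>R G 3 t + ((p 1 t ^ 4)) *\<^sub>R G 4 t" by (simp add: eval_nat_numeral)
  have "\<forall>t\<in>J. vderiv_n (Suc 4) f t = ((p 5 t)) *\<^sub>R G 1 t + (10 * (p 2 t) * (p 3 t) + 5 * (p 1 t) * (p 4 t)) *\<^sub>R G 2 t + (15 * (p 1 t) * (p 2 t ^ 2) + 10 * (p 1 t ^ 2) * (p 3 t)) *\<^sub>R G 3 t + (10 * (p 1 t ^ 3) * (p 2 t)) *\<^sub>R G 4 t + ((p 1 t ^ 5)) *\<^sub>R G 5 t"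
    by (rule vstep[OF J(1) e4]) (blast intro: faa_step4 hp hG)
  then have e5: "\<forall>t\<in>J. vderiv_n 5 f t = ((p 5 t)) *\<^sub>R G 1 t + (10 * (p 2 t) * (p 3 t) + 5 * (p 1 t) * (p 4 t)) *\<^sub>R G 2 t + (15 * (p 1 t) * (p 2 t ^ 2) + 10 * (p 1 t ^ 2) * (p 3 t)) *\<^sub>R G 3 t + (10 * (p 1 t ^ 3) * (p 2 t)) *\<^sub>R G 4 t + ((p 1 t ^ 5)) *\<^sub>R G 5 t" by (simp add: eval_nat_numeral)
  have "\<forall>t\<in>J. vderiv_n (Suc 5) f t = ((p 6 t)) *\<^sub>R G 1 t + (10 * (p 3 t ^ 2) + 15 * (p 2 t) * (p 4 t) + 6 * (p 1 t) * (p 5 t)) *\<^sub>R G 2 t + (15 * (p 2 t ^ 3) + 60 * (p 1 t) * (p 2 t) * (p 3 t) + 15 * (p 1 t ^ 2) * (p 4 t)) *\<^sub>R G 3 t + (45 * (p 1 t ^ 2) * (p 2 t ^ 2) + 20 * (p 1 t ^ 3) * (p 3 t)) *\<^sub>R G 4 t + (15 * (p 1 t ^ 4) * (p 2 t)) *\<^sub>R G 5 t + ((p 1 t ^ 6)) *\<^sub>R G 6 t"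
    by (rule vstep[OF J(1) e5]) (blast intro: faa_step5 hp hG)
  then have e6: "\<forall>t\<in>J. vderiv_n 6 f t = ((p 6 t)) *\<^sub>R G 1 t + (10 * (p 3 t ^ 2) + 15 * (p 2 t) * (p 4 t) + 6 * (p 1 t) * (p 5 t)) *\<^sub>R G 2 t + (15 * (p 2 t ^ 3) + 60 * (p 1 t) * (p 2 t) * (p 3 t) + 15 * (p 1 t ^ 2) * (p 4 t)) *\<^sub>R G 3 t + (45 * (p 1 t ^ 2) * (p 2 t ^ 2) + 20 * (p 1 t ^ 3) * (p 3 t)) *\<^sub>R G 4 t + (15 * (p 1 t ^ 4) * (p 2 t)) *\<^sub>R G 5 t + ((p 1 t ^ 6)) *\<^sub>R G 6 t" by (simp add: eval_nat_numeral)
  have "\<forall>t\<in>J. vderiv_n (Suc 6) f t = ((p 7 t)) *\<^sub>R G 1 t + (35 * (p 3 t) * (p 4 t) + 21 * (p 2 t) * (p 5 t) + 7 * (p 1 t) * (p 6 t)) *\<^sub>R G 2 t + (105 * (p 2 t ^ 2) * (p 3 t) + 70 * (p 1 t) * (p 3 t ^ 2) + 105 * (p 1 t) * (p 2 t) * (p 4 t) + 21 * (p 1 t ^ 2) * (p 5 t)) *\<^sub>R G 3 t + (105 * (p 1 t) * (p 2 t ^ 3) + 210 * (p 1 t ^ 2) * (p 2 t) * (p 3 t) + 35 * (p 1 t ^ 3) * (p 4 t)) *\<^sub>R G 4 t + (105 * (p 1 t ^ 3) * (p 2 t ^ 2) + 35 * (p 1 t ^ 4) * (p 3 t)) *\<^sub>R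 G 5 t + (21 * (p 1 t ^ 5) * (p 2 t)) *\<^sub>R G 6 t + ((p 1 t ^ 7)) *\<^sub>R G 7 t"
    by (rule vstep[OF J(1) e6]) (blast intro: faa_step6 hp hG)
  then have e7: "\<forall>t\<in>J. vderiv_n 7 f t = ((p 7 t)) *\<^sub>R G 1 t + (35 * (p 3 t) * (p 4 t) + 21 * (p 2 t) * (p 5 t) + 7 * (p 1 t) * (p 6 t)) *\<^sub>R G 2 t + (105 * (p 2 t ^ 2) * (p 3 t) + 70 * (p 1 t) * (p 3 t ^ 2) + 105 * (p 1 t) * (p 2 t) * (p 4 t) + 21 * (p 1 t ^ 2) * (p 5 t)) *\<^sub>R G 3 t + (105 * (p 1 t) * (p 2 t ^ 3) + 210 * (p 1 t ^ 2) * (p 2 t) * (p 3 t) + 35 * (p 1 t ^ 3) * (p 4 t)) *\<^sub>R G 4 t + (105 * (p 1 t ^ 3) * (p 2 t ^ 2) + 35 * (p 1 t ^ 4) * (p 3 t)) *\<^sub>R G 5 t + (21 * (p 1 t ^ 5) * (p 2 t)) *\<^sub>R G 6 t + ((p 1 t ^ 7)) *\<^sub>R G 7 t" by (simp add: eval_nat_numeral)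
  show ?thesis using e4[rule_format, OF J(2)] e5[rule_format, OF J(2)] e6[rule_format, OF J(2)] e7[rule_format, OF J(2)] z by (simp add: eval_nat_numeral)
qed
lemma kappa_reparam:
  fixes f c :: "real \<Rightarrow> real^2" and p :: "nat \<Rightarrow> real \<Rightarrow> real" and G :: "nat \<Rightarrow> real \<Rightarrow> real^2"
  assumes a: "p 1 0 \<noteq> 0"
    and h: "vderiv_n 4 f 0 = ((p 1 0 ^ 4)) *\<^sub>R G 4 0 \<and> vderiv_n 5 f 0 = (10 * (p 1 0 ^ 3) * (p 2 0)) *\<^sub>R G 4 0 + ((p 1 0 ^ 5)) *\<^sub>R G 5 0 \<and> vderiv_n 6 f 0 = (45 * (p 1 0 ^ 2) * (p 2 0 ^ 2) + 20 * (p 1 0 ^ 3) * (p 3 0)) *\<^sub>R G 4 0 + (15 * (p 1 0 ^ 4) * (p 2 0)) *\<^sub>R G 5 0 + ((p 1 0 ^ 6)) *\<^sub>R G 6 0 \<and> vderiv_n 7 f 0 = (105 * (p 1 0) * (p 2 0 ^ 3) + 210 * (p 1 0 ^ 2) * (p 2 0) * (p 3 0) + 35 * (p 1 0 ^ 3) * (p 4 0)) *\<^sub>R G 4 0 + (105 * (p 1 0 ^ 3) * (p 2 0 ^ 2) + 35 * (p 1 0 ^ 4) * (p 3 0)) *\<^sub>R G 5 0 + (21 * (p 1 0 ^ 5) * (p 2 0)) *\<^sub>R G 6 0 + ((p 1 0 ^ 7)) *\<^sub>R G 7 0"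
    and g: "vderiv_n 4 c 0 = G 4 0" "vderiv_n 5 c 0 = G 5 0" "vderiv_n 6 c 0 = G 6 0" "vderiv_n 7 c 0 = G 7 0"
  shows "cusp_kappa f = cusp_kappa c"
proof -
  define a1 a2 a3 a4 where "a1 = p 1 0" "a2 = p 2 0" "a3 = p 3 0" "a4 = p 4 0"
  define g4 g5 g6 g7 where "g4 = G 4 0" "g5 = G 5 0" "g6 = G 6 0" "g7 = G 7 0"
  define A B C D where "A = det2 g5 g4" "B = det2 g6 g4" "C = det2 g7 g4" "D = det2 g6 g5"
  have c4: "vderiv_n 4 f 0 = a1^4 *\<^sub>R g4" using h unfolding a1_a2_a3_a4_def g4_g5_g6_g7_def by simp
  have c5: "vderiv_n 5 f 0 = (10 * a1^3 * a2) *\<^sub>R g4 + a1^5 *\<^sub>R g5" using h unfolding a1_a2_a3_a4_def g4_g5_g6_g7_def by simp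
  have c6: "vderiv_n 6 f 0 = (45 * a1^2 * a2^2 + 20 * a1^3 * a3) *\<^sub>R g4 + (15 * a1^4 * a2) *\<^sub>R g5 + a1^6 *\<^sub>R g6"
    using h unfolding a1_a2_a3_a4_def g4_g5_g6_g7_def by simp
  have c7: "vderiv_n 7 f 0 = (105 * a1 * a2^3 + 210 * a1^2 * a2 * a3 + 35 * a1^3 * a4) *\<^sub>R g4 + (105 * a1^3 * a2^2 + 35 * a1^4 * a3) *\<^sub>R g5 + (21 * a1^5 * a2) *\<^sub>R g6 + a1^7 *\<^sub>R g7"
    using h unfolding a1_a2_a3_a4_def g4_g5_g6_g7_def by simp
  have A': "det2 (vderiv_n 5 f 0) (vderiv_n 4 f 0) = a1^9 * A"
    unfolding c4 c5 A_B_C_D_def det2_def by (simp add: algebra_simps eval_nat_numeral)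
  have B': "det2 (vderiv_n 6 f 0) (vderiv_n 4 f 0) = 15 * a1^8 * a2 * A + a1^10 * B"
    unfolding c4 c6 A_B_C_D_def det2_def by (simp add: algebra_simps eval_nat_numeral)
  have C': "det2 (vderiv_n 7 f 0) (vderiv_n 4 f 0) = a1^4 * ((105 * a1^3 * a2^2 + 35 * a1^4 * a3) * A + 21 * a1^5 * a2 * B + a1^7 * C)"
    unfolding c4 c7 A_B_C_D_def det2_def by (simp add: algebra_simps eval_nat_numeral)
  have D': "det2 (vderiv_n 6 f 0) (vderiv_n 5 f 0) = (15 * a1^4 * a2 * (10 * a1^3 * a2) - (45 * a1^2 * a2^2 + 20 * a1^3 * a3) * a1^5) * A + a1^6 * (10 * a1^3 * a2) * B + a1^6 * a1^5 * D"
    unfolding c5 c6 A_B_C_D_def det2_def by (simp add: algebra_simps eval_nat_numeral)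
  have N: "norm (vderiv_n 4 f 0) ^ 5 = a1^20 * norm g4 ^ 5"
  proof -
    have "norm (vderiv_n 4 f 0) ^ 5 = \<bar>a1\<bar>^20 * norm g4 ^ 5" unfolding c4 by (simp add: power_abs power_mult_distrib flip: power_mult)
    also have "\<bar>a1\<bar>^20 = a1^20" by (simp add: power_even_abs_numeral)
    finally show ?thesis .
  qed
  have num: "-77 * (15 * a1^8 * a2 * A + a1^10 * B)^2 + 105 * (a1^9 * A) * ((15 * a1^4 * a2 * (10 * a1^3 * a2) - (45 * a1^2 * a2^2 + 20 * a1^3 * a3) * a1^5) * A + a1^6 * (10 * a1^3 * a2) * B + a1^6 * a1^5 * D) + 60 * (a1^9 * A) * (a1^4 * ((105 * a1^3 * a2^2 + 35 * a1^4 * a3) * A + 21 * a1^5 * a2 * B + a1^7 * C))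
      = a1^20 * (-77 * B^2 + 105 * A * D + 60 * A * C)"
    by (simp add: algebra_simps power2_eq_square eval_nat_numeral)
  have a1: "a1 \<noteq> 0" using a a1_a2_a3_a4_def by simp
  have L: "cusp_kappa f = (a1^20 * (-77 * B^2 + 105 * A * D + 60 * A * C)) / (a1^20 * norm g4 ^ 5)"
    unfolding cusp_kappa_def Let_def A' B' C' D' N num[symmetric] ..
  have R: "cusp_kappa c = (-77 * B^2 + 105 * A * D + 60 * A * C) / norm g4 ^ 5"
    unfolding cusp_kappa_def Let_def g g4_g5_g6_g7_def[symmetric] A_B_C_D_def[symmetric] ..
  show ?thesis unfolding L R using a1 by simp
qed
lemma rot_deriv:
  fixes R :: "real^2^2" and b :: "real^2"
  assumes I: "open I" and sm: "smooth_on I \<gamma>"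
  shows "\<forall>t\<in>I. vderiv_n n (\<lambda>t. R *v \<gamma> t + b) t = R *v vderiv_n n \<gamma> t + (if n = 0 then b else 0)"
proof (induction n)
  case 0
  then show ?case by simp
next
  case (Suc n)
  show ?case
  proof (rule vstep[OF I Suc])
    show "\<forall>t\<in>I. ((\<lambda>t. R *v vderiv_n n \<gamma> t + (if n = 0 then b else 0)) has_vector_derivative
            R *v vderiv_n (Suc n) \<gamma> t + (if Suc n = 0 then b else 0)) (at t)"
    proof
      fix t assume t: "t \<in> I"
      have d: "(vderiv_n n \<gamma> has_vector_derivative vderiv_n (Suc n) \<gamma> t) (at t)"
        using sm t unfolding smooth_on_def by blast
      have "((\<lambda>s. R *v vderiv_n n \<gamma> s) has_vector_derivative R *v vderiv_n (Suc n) \<gamma> t) (at t)"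
        by (rule bounded_linear.has_vector_derivative[OF matrix_vector_mul_bounded_linear d])
      from has_vector_derivative_add[OF this has_vector_derivative_const]
      show "((\<lambda>t. R *v vderiv_n n \<gamma> t + (if n = 0 then b else 0)) has_vector_derivative
            R *v vderiv_n (Suc n) \<gamma> t + (if Suc n = 0 then b else 0)) (at t)" by simp
    qed
  qed
qed

lemma det2_mat:
  fixes R :: "real^2^2" and u v :: "real^2"
  shows "det2 (R *v u) (R *v v) = det R * det2 u v"
  unfolding det2_def det_2 matrix_vector_mult_def by (simp add: sum_2 algebra_simps)

lemma kappa_rot:
  fixes R :: "real^2^2" and b :: "real^2"
  assumes I: "open I" "0 \<in> I" and sm: "smooth_on I \<gamma>" and R: "orthogonal_matrix R"
  shows "cusp_kappa (\<lambda>t. R *v \<gamma> t + b) = cusp_kappa \<gamma>"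
proof -
  have e: "\<And>n. n \<noteq> 0 \<Longrightarrow> vderiv_n n (\<lambda>t. R *v \<gamma> t + b) 0 = R *v vderiv_n n \<gamma> 0"
    using rot_deriv[OF I(1) sm, where R=R and b=b] I(2) by auto
  have ot: "orthogonal_transformation (\<lambda>x. R *v x)"
    using R by (simp add: orthogonal_transformation_matrix matrix_vector_mul_linear)
  have nm: "\<And>x. norm (R *v x) = norm x" using orthogonal_transformation_norm[OF ot] .
  have dR: "det R * det R = 1" using det_orthogonal_matrix[OF R] by auto
  have key: "\<And>A B C D::real. -77*(det R*B)^2 + 105*(det R*A)*(det R*D) + 60*(det R*A)*(det R*C) = -77*B^2+105*A*D+60*A*C"
  proof -
    fix A B C D :: real
    have "-77*(det R*B)^2 + 105*(det R*A)*(det R*D) + 60*(det R*A)*(det R*C) = (det R * det R) * (-77*B^2+105*A*D+60*A*C)"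
      by (simp add: algebra_simps power2_eq_square)
    then show "-77*(det R*B)^2 + 105*(det R*A)*(det R*D) + 60*(det R*A)*(det R*C) = -77*B^2+105*A*D+60*A*C"
      using dR by simp
  qed
  show ?thesis
    unfolding cusp_kappa_def Let_def e[of 4, simplified] e[of 5, simplified] e[of 6, simplified] e[of 7, simplified] det2_mat nm key ..
qed

theorem mainTheorem10:
  fixes \<gamma> :: "real \<Rightarrow> real^2" and I :: "real set"
  assumes "is_interval I" "open I" "0 \<in> I"
    and "smooth_on I \<gamma>"
    and "vderiv_n 1 \<gamma> 0 = 0" "vderiv_n 2 \<gamma> 0 = 0" "vderiv_n 3 \<gamma> 0 = 0"
    and "vderiv_n 4 \<gamma> 0 \<noteq> 0"
  shows "(\<forall>(\<psi>::real \<Rightarrow> real) J. open J \<and> 0 \<in> J \<and> \<psi> 0 = 0 \<and> \<psi> ` J \<subseteq> I \<and>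
            smooth_on J \<psi> \<and> inj_on \<psi> J \<and> open (\<psi> ` J) \<and>
            smooth_on (\<psi> ` J) (the_inv_into J \<psi>)
           \<longrightarrow> cusp_kappa (\<gamma> \<circ> \<psi>) = cusp_kappa \<gamma>)
       \<and> (\<forall>(R::real^2^2) (b::real^2). orthogonal_matrix R
           \<longrightarrow> cusp_kappa (\<lambda>t. R *v \<gamma> t + b) = cusp_kappa \<gamma>)"
proof (intro conjI allI impI)
  fix R :: "real^2^2" and b :: "real^2"
  assume "orthogonal_matrix R"
  then show "cusp_kappa (\<lambda>t. R *v \<gamma> t + b) = cusp_kappa \<gamma>"
    using kappa_rot assms by blast
next
  fix \<psi> :: "real \<Rightarrow> real" and J
  assume H: "open J \<and> 0 \<in> J \<and> \<psi> 0 = 0 \<and> \<psi> ` J \<subseteq> I \<and>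
            smooth_on J \<psi> \<and> inj_on \<psi> J \<and> open (\<psi> ` J) \<and>
            smooth_on (\<psi> ` J) (the_inv_into J \<psi>)"
  then have J: "open J" "0 \<in> J" and p0: "\<psi> 0 = 0" and sub: "\<psi> ` J \<subseteq> I"
    and smp: "smooth_on J \<psi>" and inj: "inj_on \<psi> J" and oJ: "open (\<psi> ` J)"
    and smi: "smooth_on (\<psi> ` J) (the_inv_into J \<psi>)" by auto
  have sg: "smooth_on I \<gamma>" using assms by simp
  have hpv: "\<And>j t. t \<in> J \<Longrightarrow> (vderiv_n j \<psi> has_vector_derivative vderiv_n (Suc j) \<psi> t) (at t)"
    using smp unfolding smooth_on_def by blast
  have hp: "\<And>j t. t \<in> J \<Longrightarrow> ((\<lambda>j. vderiv_n j \<psi>) j has_real_derivative (\<lambda>j. vderiv_n j \<psi>) (Suc j) t) (at t)"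
    using hpv by (simp add: has_real_derivative_iff_has_vector_derivative)
  have hpsi: "\<And>t. t \<in> J \<Longrightarrow> (\<psi> has_vector_derivative vderiv_n 1 \<psi> t) (at t)"
    using hpv[of _ 0] by simp
  have hG: "\<And>k t. t \<in> J \<Longrightarrow> ((\<lambda>k s. vderiv_n k \<gamma> (\<psi> s)) k has_vector_derivative
       (\<lambda>j. vderiv_n j \<psi>) 1 t *\<^sub>R (\<lambda>k s. vderiv_n k \<gamma> (\<psi> s)) (Suc k) t) (at t)"
  proof -
    fix k t assume t: "t \<in> J"
    have "(vderiv_n k \<gamma> has_vector_derivative vderiv_n (Suc k) \<gamma> (\<psi> t)) (at (\<psi> t))"
      using sg sub t unfolding smooth_on_def by blast
    from vector_diff_chain_at[OF hpsi[OF t] this]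
    show "((\<lambda>k s. vderiv_n k \<gamma> (\<psi> s)) k has_vector_derivative
       (\<lambda>j. vderiv_n j \<psi>) 1 t *\<^sub>R (\<lambda>k s. vderiv_n k \<gamma> (\<psi> s)) (Suc k) t) (at t)"
      by (simp add: o_def)
  qed
  have f0: "\<And>t. t \<in> J \<Longrightarrow> (\<gamma> \<circ> \<psi>) t = (\<lambda>k s. vderiv_n k \<gamma> (\<psi> s)) 0 t" by simp
  have z: "(\<lambda>k s. vderiv_n k \<gamma> (\<psi> s)) 1 0 = 0" "(\<lambda>k s. vderiv_n k \<gamma> (\<psi> s)) 2 0 = 0"
    "(\<lambda>k s. vderiv_n k \<gamma> (\<psi> s)) 3 0 = 0" using assms p0 by simp_all
  note F = faa_all[where J=J and p="\<lambda>j. vderiv_n j \<psi>" and G="\<lambda>k s. vderiv_n k \<gamma> (\<psi> s)" and f="\<gamma> \<circ> \<psi>", OF J hp hG f0 z]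
  have a: "(\<lambda>j. vderiv_n j \<psi>) 1 0 \<noteq> 0"
  proof
    assume a0: "(\<lambda>j. vderiv_n j \<psi>) 1 0 = 0"
    define \<phi> where "\<phi> = the_inv_into J \<psi>"
    have "0 \<in> \<psi> ` J" using J p0 by force
    then have "(vderiv_n 0 \<phi> has_vector_derivative vderiv_n (Suc 0) \<phi> 0) (at 0)"
      using smi unfolding smooth_on_def \<phi>_def by blast
    then have "(\<phi> has_vector_derivative vderiv_n (Suc 0) \<phi> 0) (at (\<psi> 0))" using p0 by simp
    from vector_diff_chain_at[OF hpsi[OF J(2)] this]
    have "((\<phi> \<circ> \<psi>) has_vector_derivative 0) (at 0)" using a0 by simp
    from has_vector_derivative_transform_within_open[OF this J, of "\<lambda>x. x"]
    have "((\<lambda>x. x) has_vector_derivative 0) (at (0::real))"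
      using inj by (simp add: \<phi>_def the_inv_into_f_f)
    moreover have "((\<lambda>x. x) has_vector_derivative 1) (at (0::real))" by simp
    ultimately have "(0::real) = 1" using vector_derivative_at by metis
    then show False by simp
  qed
  show "cusp_kappa (\<gamma> \<circ> \<psi>) = cusp_kappa \<gamma>"
    by (rule kappa_reparam[where p="\<lambda>j. vderiv_n j \<psi>" and G="\<lambda>k s. vderiv_n k \<gamma> (\<psi> s)" and f="\<gamma> \<circ> \<psi>" and c=\<gamma>, OF a F]) (simp_all add: p0)
qed

end
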